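(* Let $\mathcal{M}\in\mathcal{K}(2^{\mathbb{N}})$ and suppose $\mathcal{M}$ contains an infinite subset of $\mathbb{N}$. Then $T^*[\mathcal{M},\tfrac12]$ is isomorphic to the $c_0$-sum of a sequence of finite-dimensional spaces, and consequently $T^*[\mathcal{M},\tfrac12]$ embeds isomorphically into $c_0$.
   Context: Elements of $2^{\mathbb{N}}$ are identified with subsets of $\mathbb{N}$, and $\mathcal{K}(2^{\mathbb{N}})$ is the space of compact subsets of $2^{\mathbb{N}}$ (so $\mathcal{M}$ is a closed family of subsets of $\mathbb{N}$). Let $e_n=\mathbf{1}_{\{n\}}$ be the canonical basis of $c_{00}$ (finitely supported real sequences), and for $E\subset\mathbb{N}$, $x\in c_{00}$ let $Ex=\mathbf{1}_E\cdot x$. A family $\{E_1,\dots,E_n\}$ of successive finite subsets of $\mathbb{N}$ is $\mathcal{M}$-admissible if some element of $\mathcal{M}$ contains numbers $m_1,\dots,m_n$ with $m_1\le E_1<m_2\le E_2<\dots<m_n\le E_n$. Let $\Theta_{\mathcal{M}}$ be the smallest absolutely convex subset of $c_{00}$ containing all $e_i$ and such that whenever $\{E_1,\dots,E_n\}$ is $\mathcal{M}$-admissible and $x_1,\dots,x_n\in\Theta_{\mathcal{M}}$, then $\frac12\sum_{k=1}^n E_kx_k\in\Theta_{\mathcal{M}}$. Let $\|\cdot\|_{\mathcal{M}}$ be the Minkowski gauge of $\Theta_{\mathcal{M}}$ and $T^*[\mathcal{M},\frac12]$ the completion of $(c_{00},\|\cdot\|_{\mathcal{M}})$. *)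

theory Defs
  imports "HOL-Analysis.Analysis"
begin

text \<open>Subsets of nat identified with points of the Cantor space 2^N (characteristic functions);
  M is compact in 2^N iff its image is closed in the product of discrete two-point spaces.\<close>
definition cantor_compact :: "nat set set \<Rightarrow> bool" where
  "cantor_compact M \<longleftrightarrow>
     compactin (product_topology (\<lambda>_. discrete_topology (UNIV::bool set)) UNIV)
               ((\<lambda>A n. n \<in> A) ` M)"

definition c00 :: "(nat \<Rightarrow> real) set" where
  "c00 = {x. finite {i. x i \<noteq> 0}}"

definition unitvec :: "nat \<Rightarrow> nat \<Rightarrow> real" where
  "unitvec n = (\<lambda>i. if i = n then 1 else 0)"

definition admissible :: "nat set set \<Rightarrow> nat set list \<Rightarrow> bool" where
  "admissible M Es \<longleftrightarrow>
     (\<forall>k < length Es. finite (Es!k) \<and> Es!k \<noteq> {}) \<and>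
     (\<forall>k. Suc k < length Es \<longrightarrow> (\<forall>a\<in>Es!k. \<forall>b\<in>Es!Suc k. a < b)) \<and>
     (\<exists>ms F. length ms = length Es \<and> F \<in> M \<and> set ms \<subseteq> F \<and>
        (\<forall>k < length Es. \<forall>j \<in> Es!k. ms!k \<le> j) \<and>
        (\<forall>k. Suc k < length Es \<longrightarrow> (\<forall>j \<in> Es!k. j < ms!Suc k)))"

inductive_set Theta :: "nat set set \<Rightarrow> (nat \<Rightarrow> real) set" for M where
  basis: "unitvec n \<in> Theta M"
| absconv: "x \<in> Theta M \<Longrightarrow> y \<in> Theta M \<Longrightarrow> \<bar>a\<bar> + \<bar>b\<bar> \<le> 1 \<Longrightarrow>
            (\<lambda>i. a * x i + b * y i) \<in> Theta M"
| admis: "admissible M Es \<Longrightarrow> length xs = length Es \<Longrightarrow> (\<forall>x \<in> set xs. x \<in> Theta M) \<Longrightarrow>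
          (\<lambda>i. (1/2) * (\<Sum>k < length Es. indicator (Es!k) i * (xs!k) i)) \<in> Theta M"

text \<open>Minkowski gauge of Theta_M (the norm of T^*[M,1/2] on c00).\<close>
definition normM :: "nat set set \<Rightarrow> (nat \<Rightarrow> real) \<Rightarrow> real" where
  "normM M x = Inf {t. 0 < t \<and> (\<exists>y \<in> Theta M. x = (\<lambda>i. t * y i))}"

text \<open>A norm N on the d-dimensional space of vectors supported in {..<d}
  (a model of an arbitrary d-dimensional normed space).\<close>
definition fd_norm :: "nat \<Rightarrow> ((nat \<Rightarrow> real) \<Rightarrow> real) \<Rightarrow> bool" where
  "fd_norm d N \<longleftrightarrow>
     (\<forall>x. (\<forall>i\<ge>d. x i = 0) \<longrightarrow> 0 \<le> N x \<and> (N x = 0 \<longleftrightarrow> x = (\<lambda>_. 0))) \<and>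
     (\<forall>x a. (\<forall>i\<ge>d. x i = 0) \<longrightarrow> N (\<lambda>i. a * x i) = \<bar>a\<bar> * N x) \<and>
     (\<forall>x y. (\<forall>i\<ge>d. x i = 0) \<longrightarrow> (\<forall>i\<ge>d. y i = 0) \<longrightarrow> N (\<lambda>i. x i + y i) \<le> N x + N y)"

definition c0_sum :: "(nat \<Rightarrow> nat) \<Rightarrow> (nat \<Rightarrow> (nat \<Rightarrow> real) \<Rightarrow> real) \<Rightarrow> (nat \<Rightarrow> nat \<Rightarrow> real) set" where
  "c0_sum d N = {y. (\<forall>n. \<forall>i\<ge>d n. y n i = 0) \<and> (\<lambda>n. N n (y n)) \<longlonglongrightarrow> 0}"

definition c0_sum_norm :: "(nat \<Rightarrow> (nat \<Rightarrow> real) \<Rightarrow> real) \<Rightarrow> (nat \<Rightarrow> nat \<Rightarrow> real) \<Rightarrow> real" where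
  "c0_sum_norm N y = (SUP n. N n (y n))"

definition c0 :: "(nat \<Rightarrow> real) set" where
  "c0 = {y. y \<longlonglongrightarrow> 0}"

definition c0_norm :: "(nat \<Rightarrow> real) \<Rightarrow> real" where
  "c0_norm y = (SUP i. \<bar>y i\<bar>)"

definition linear_on_c00 :: "((nat \<Rightarrow> real) \<Rightarrow> 'b \<Rightarrow> real) \<Rightarrow> bool" where
  "linear_on_c00 T \<longleftrightarrow> (\<forall>x\<in>c00. \<forall>y\<in>c00. \<forall>a b.
      T (\<lambda>i. a * x i + b * y i) = (\<lambda>j. a * T x j + b * T y j))"

definition linear_on_c00' :: "((nat \<Rightarrow> real) \<Rightarrow> nat \<Rightarrow> nat \<Rightarrow> real) \<Rightarrow> bool" where
  "linear_on_c00' T \<longleftrightarrow> (\<forall>x\<in>c00. \<forall>y\<in>c00. \<forall>a b.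
      T (\<lambda>i. a * x i + b * y i) = (\<lambda>n j. a * T x n j + b * T y n j))"

end

theory Submission
  imports Defs
begin


definition supp_in :: "nat set \<Rightarrow> (nat \<Rightarrow> real) \<Rightarrow> bool" where
  "supp_in I x \<longleftrightarrow> (\<forall>i. i \<notin> I \<longrightarrow> x i = 0)"

lemma Theta_zero: "(\<lambda>_. 0) \<in> Theta M"
proof -
  have "(\<lambda>i. 0 * unitvec 0 i + 0 * unitvec 0 i) \<in> Theta M"
    by (rule Theta.absconv[OF Theta.basis Theta.basis]) simp
  then show ?thesis by simp
qed

lemma Theta_scale: "y \<in> Theta M \<Longrightarrow> \<bar>a\<bar> \<le> 1 \<Longrightarrow> (\<lambda>i. a * y i) \<in> Theta M"
  using Theta.absconv[of y M y a 0] by simp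

lemma admissible_disj:
  assumes adm: "admissible M Es" and kk: "k < k'" "k' < length Es"
  shows "\<forall>a\<in>Es!k. \<forall>b\<in>Es!k'. a < b"
  using kk
proof (induction k' rule: less_induct)
  case (less k')
  from less.prems obtain k'' where k'': "k' = Suc k''" by (cases k') auto
  have succ: "\<forall>a\<in>Es!k''. \<forall>b\<in>Es!k'. a < b"
    using adm less.prems k'' unfolding admissible_def by auto
  show ?case
  proof (cases "k = k''")
    case True then show ?thesis using succ by simp
  next
    case False
    then have "k < k''" using less.prems k'' by simp
    then have ih: "\<forall>a\<in>Es!k. \<forall>b\<in>Es!k''. a < b" using less k'' by auto
    have "Es!k'' \<noteq> {}" using adm less.prems k'' unfolding admissible_def by auto
    then obtain c where "c \<in> Es!k''" by blast
    then show ?thesis using ih succ by fastforce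
  qed
qed

lemma sum_single:
  fixes f :: "nat \<Rightarrow> real"
  assumes "k0 < L" "\<And>k. k < L \<Longrightarrow> k \<noteq> k0 \<Longrightarrow> f k = 0"
  shows "(\<Sum>k<L. f k) = f k0"
proof -
  have "(\<Sum>k<L. f k) = f k0 + (\<Sum>k\<in>{..<L} - {k0}. f k)"
    using assms(1) by (simp add: sum.remove)
  also have "(\<Sum>k\<in>{..<L} - {k0}. f k) = 0" using assms(2) by (intro sum.neutral) auto
  finally show ?thesis by simp
qed

lemma Theta_bound: "y \<in> Theta M \<Longrightarrow> \<bar>y i\<bar> \<le> 1"
proof (induction y arbitrary: i rule: Theta.induct)
  case (basis n) then show ?case by (simp add: unitvec_def)
next
  case (absconv x y a b)
  have "\<bar>a * x i + b * y i\<bar> \<le> \<bar>a\<bar> * \<bar>x i\<bar> + \<bar>b\<bar> * \<bar>y i\<bar>"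
    by (metis abs_mult abs_triangle_ineq)
  also have "\<dots> \<le> \<bar>a\<bar> * 1 + \<bar>b\<bar> * 1"
    using absconv.IH by (intro add_mono mult_left_mono) auto
  finally show ?case using absconv.hyps by simp
next
  case (admis Es xs)
  show ?case
  proof (cases "\<exists>k0<length Es. i \<in> Es!k0")
    case True
    then obtain k0 where k0: "k0 < length Es" "i \<in> Es!k0" by blast
    have "(\<Sum>k<length Es. indicator (Es ! k) i * (xs ! k) i) = indicator (Es ! k0) i * (xs ! k0) i"
    proof (rule sum_single[OF k0(1)])
      fix k assume "k < length Es" "k \<noteq> k0"
      have "i \<notin> Es!k"
      proof
        assume ik: "i \<in> Es!k"
        show False
        proof (cases "k < k0")
          case True
          then have "\<forall>a\<in>Es!k. \<forall>b\<in>Es!k0. a < b" using admissible_disj[OF admis.hyps(1)] k0 by blast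
          then show False using ik k0 by blast
        next
          case False
          then have "k0 < k" using \<open>k \<noteq> k0\<close> by simp
          then have "\<forall>a\<in>Es!k0. \<forall>b\<in>Es!k. a < b" using admissible_disj[OF admis.hyps(1)] \<open>k < length Es\<close> by blast
          then show False using ik k0 by blast
        qed
      qed
      then show "indicator (Es ! k) i * (xs ! k) i = 0" by simp
    qed
    moreover have "xs ! k0 \<in> set xs" using admis.hyps(2) k0 by simp
    then have "\<bar>(xs ! k0) i\<bar> \<le> 1" using admis.IH by blast
    ultimately show ?thesis using k0 by simp
  next
    case False
    then have "(\<Sum>k<length Es. indicator (Es ! k) i * (xs ! k) i) = 0"
      by (intro sum.neutral) auto
    then show ?thesis by simp
  qed
qed

lemma Theta_proj: "y \<in> Theta M \<Longrightarrow> (\<lambda>i. indicator E i * y i) \<in> Theta M"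
proof (induction y rule: Theta.induct)
  case (basis n)
  show ?case
  proof (cases "n \<in> E")
    case True
    then have "(\<lambda>i. indicator E i * unitvec n i) = unitvec n" by (auto simp: unitvec_def)
    then show ?thesis using Theta.basis by metis
  next
    case False
    then have "(\<lambda>i. indicator E i * unitvec n i) = (\<lambda>_. 0)" by (auto simp: unitvec_def)
    then show ?thesis using Theta_zero by metis
  qed
next
  case (absconv x y a b)
  have "(\<lambda>i. indicator E i * (a * x i + b * y i)) =
        (\<lambda>i. a * (indicator E i * x i) + b * (indicator E i * y i))"
    by (auto simp: algebra_simps)
  then show ?case using Theta.absconv[OF absconv.IH absconv.hyps(3)] by simp
next
  case (admis Es xs)
  define xs' where "xs' = map (\<lambda>z i. indicator E i * z i) xs"
  have "length xs' = length Es" using admis.hyps by (simp add: xs'_def)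
  moreover have "\<forall>x\<in>set xs'. x \<in> Theta M" using admis.IH by (auto simp: xs'_def)
  ultimately have "(\<lambda>i. (1/2) * (\<Sum>k < length Es. indicator (Es!k) i * (xs'!k) i)) \<in> Theta M"
    using Theta.admis[OF admis.hyps(1)] by blast
  moreover have "(\<lambda>i. (1/2) * (\<Sum>k < length Es. indicator (Es!k) i * (xs'!k) i)) =
     (\<lambda>i. indicator E i * (1/2 * (\<Sum>k<length Es. indicator (Es ! k) i * (xs ! k) i)))"
  proof (rule ext)
    fix i
    have "(\<Sum>k < length Es. indicator (Es!k) i * (xs'!k) i) =
          (\<Sum>k < length Es. indicator E i * (indicator (Es!k) i * (xs!k) i))"
      using admis.hyps(2) by (intro sum.cong) (auto simp: xs'_def)
    then show "(1/2) * (\<Sum>k < length Es. indicator (Es!k) i * (xs'!k) i) =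
      indicator E i * (1/2 * (\<Sum>k<length Es. indicator (Es ! k) i * (xs ! k) i))"
      by (simp add: sum_distrib_left[symmetric])
  qed
  ultimately show ?case by simp
qed

lemma Theta_l1:
  assumes "finite S"
  shows "supp_in S x \<Longrightarrow> (\<Sum>i\<in>S. \<bar>x i\<bar>) \<le> 1 \<Longrightarrow> x \<in> Theta M"
  using assms
proof (induction S arbitrary: x rule: finite_induct)
  case empty
  then have "x = (\<lambda>_. 0)" by (auto simp: supp_in_def)
  then show ?case using Theta_zero by simp
next
  case (insert j S)
  define r where "r = x(j := 0)"
  define b where "b = (\<Sum>i\<in>S. \<bar>x i\<bar>)"
  have rS: "supp_in S r" using insert.prems by (auto simp: supp_in_def r_def)
  have sumr: "(\<Sum>i\<in>S. \<bar>r i\<bar>) = b" unfolding b_def r_def using insert.hyps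
    by (intro sum.cong) auto
  have tot: "\<bar>x j\<bar> + b \<le> 1" using insert by (simp add: b_def)
  have b0: "b \<ge> 0" unfolding b_def by (simp add: sum_nonneg)
  show ?case
  proof (cases "b = 0")
    case True
    have "\<forall>i\<in>S. \<bar>r i\<bar> = 0" using sumr True insert.hyps(1)
      by (metis abs_ge_zero sum_nonneg_eq_0_iff)
    then have "r = (\<lambda>_. 0)" using rS by (auto simp: supp_in_def)
    then have "x = (\<lambda>i. x j * unitvec j i + 0 * unitvec j i)"
      by (auto simp: r_def unitvec_def fun_eq_iff split: if_splits)
    moreover have "(\<lambda>i. x j * unitvec j i + 0 * unitvec j i) \<in> Theta M"
      by (rule Theta.absconv[OF Theta.basis Theta.basis]) (use tot True in simp)
    ultimately show ?thesis by simp
  next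
    case False
    then have bp: "b > 0" using b0 by simp
    have "(\<Sum>i\<in>S. \<bar>r i / b\<bar>) = 1" using bp sumr by (simp add: sum_divide_distrib[symmetric])
    moreover have "supp_in S (\<lambda>i. r i / b)" using rS by (auto simp: supp_in_def)
    ultimately have rb: "(\<lambda>i. r i / b) \<in> Theta M" using insert.IH by simp
    have "x = (\<lambda>i. x j * unitvec j i + b * (r i / b))"
      using bp by (auto simp: r_def unitvec_def fun_eq_iff)
    moreover have "(\<lambda>i. x j * unitvec j i + b * (r i / b)) \<in> Theta M"
      by (rule Theta.absconv[OF Theta.basis rb]) (use tot bp in simp)
    ultimately show ?thesis by simp
  qed
qed




definition gset :: "nat set set \<Rightarrow> (nat \<Rightarrow> real) \<Rightarrow> real set" where
  "gset M x = {t. 0 < t \<and> (\<exists>y \<in> Theta M. x = (\<lambda>i. t * y i))}"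

lemma normM_gset: "normM M x = Inf (gset M x)"
  by (simp add: normM_def gset_def)

lemma c00_supp: "finite S \<Longrightarrow> supp_in S x \<Longrightarrow> x \<in> c00"
  unfolding c00_def supp_in_def by (auto elim: finite_subset[rotated])

lemma c00_supp_iff: "x \<in> c00 \<longleftrightarrow> (\<exists>S. finite S \<and> supp_in S x)"
  unfolding c00_def supp_in_def by (auto elim: finite_subset[rotated])

lemma gset_nonempty:
  assumes "x \<in> c00" shows "gset M x \<noteq> {}"
proof -
  obtain S where S: "finite S" "supp_in S x" using assms c00_supp_iff by blast
  define l where "l = (\<Sum>i\<in>S. \<bar>x i\<bar>)"
  have l0: "l \<ge> 0" unfolding l_def by (simp add: sum_nonneg)
  define t where "t = l + 1"
  have tp: "t > 0" using l0 by (simp add: t_def)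
  have "(\<Sum>i\<in>S. \<bar>x i / t\<bar>) = l / t" using tp by (simp add: l_def sum_divide_distrib)
  also have "\<dots> \<le> 1" using tp by (simp add: t_def)
  finally have "(\<lambda>i. x i / t) \<in> Theta M"
    using Theta_l1[OF S(1)] S(2) by (auto simp: supp_in_def)
  moreover have "x = (\<lambda>i. t * (x i / t))" using tp by auto
  ultimately have "\<exists>y\<in>Theta M. x = (\<lambda>i. t * y i)" by (intro bexI)
  then have "t \<in> gset M x" using tp unfolding gset_def by simp
  then show ?thesis by blast
qed

lemma normM_le: "0 < t \<Longrightarrow> y \<in> Theta M \<Longrightarrow> x = (\<lambda>i. t * y i) \<Longrightarrow> normM M x \<le> t"
  unfolding normM_gset
  by (rule cInf_lower) (auto simp: gset_def bdd_below_def intro!: exI[of _ 0])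

lemma normM_nonneg: "x \<in> c00 \<Longrightarrow> 0 \<le> normM M x"
  unfolding normM_gset by (rule cInf_greatest[OF gset_nonempty]) (auto simp: gset_def)

lemma normM_lt:
  assumes "x \<in> c00" "normM M x < s"
  shows "\<exists>y \<in> Theta M. x = (\<lambda>i. s * y i)"
proof -
  obtain t where t: "t \<in> gset M x" "t < s"
    using cInf_lessD[OF gset_nonempty[OF assms(1)]] assms(2) unfolding normM_gset by blast
  then obtain y where y: "y \<in> Theta M" "x = (\<lambda>i. t * y i)" "0 < t" unfolding gset_def by blast
  have sp: "s > 0" using t y by simp
  have "(\<lambda>i. (t/s) * y i) \<in> Theta M" by (rule Theta_scale[OF y(1)]) (use t y sp in simp)
  moreover have "x = (\<lambda>i. s * ((t/s) * y i))" using y sp by auto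
  ultimately show ?thesis by (intro bexI)
qed

lemma normM_abs_le:
  assumes "x \<in> c00" shows "\<bar>x i\<bar> \<le> normM M x"
proof (rule dense_ge)
  fix s assume "normM M x < s"
  then obtain y where y: "y \<in> Theta M" "x = (\<lambda>i. s * y i)" using normM_lt assms by blast
  have sp: "s > 0" using normM_nonneg[OF assms, of M] \<open>normM M x < s\<close> by simp
  have "\<bar>x i\<bar> = s * \<bar>y i\<bar>" using y sp by (simp add: abs_mult)
  also have "\<dots> \<le> s * 1" using Theta_bound[OF y(1)] sp by (intro mult_left_mono) auto
  finally show "\<bar>x i\<bar> \<le> s" by simp
qed

lemma zero_c00: "(\<lambda>_. 0) \<in> c00" by (simp add: c00_def)

lemma normM_zero: "normM M (\<lambda>_. 0) = 0"
proof (rule antisym)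
  show "normM M (\<lambda>_. 0) \<le> 0"
  proof (rule dense_ge)
    fix t :: real assume "0 < t"
    then show "normM M (\<lambda>_. 0) \<le> t" using normM_le[OF _ Theta_zero] by simp
  qed
  show "0 \<le> normM M (\<lambda>_. 0)" using normM_nonneg[OF zero_c00] .
qed

lemma c00_scale: "x \<in> c00 \<Longrightarrow> (\<lambda>i. a * x i) \<in> c00"
  unfolding c00_def by (auto elim: finite_subset[rotated])

lemma c00_add: "x \<in> c00 \<Longrightarrow> y \<in> c00 \<Longrightarrow> (\<lambda>i. x i + y i) \<in> c00"
proof -
  assume "x \<in> c00" "y \<in> c00"
  then have "finite ({i. x i \<noteq> 0} \<union> {i. y i \<noteq> 0})" by (simp add: c00_def)
  then show ?thesis unfolding c00_def mem_Collect_eq by (rule finite_subset[rotated]) auto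
qed

lemma c00_proj: "x \<in> c00 \<Longrightarrow> (\<lambda>i. indicator E i * x i) \<in> c00"
  unfolding c00_def by (auto elim: finite_subset[rotated])

lemma normM_scale_le:
  assumes "x \<in> c00" shows "normM M (\<lambda>i. a * x i) \<le> \<bar>a\<bar> * normM M x"
proof (cases "a = 0")
  case True then show ?thesis using normM_zero by simp
next
  case False
  show ?thesis
  proof (rule dense_ge)
    fix z assume z: "\<bar>a\<bar> * normM M x < z"
    define s where "s = z / \<bar>a\<bar>"
    have "normM M x < s" using z False by (simp add: s_def field_simps)
    then obtain y where y: "y \<in> Theta M" "x = (\<lambda>i. s * y i)" using normM_lt assms by blast
    have zp: "z > 0" using z normM_nonneg[OF assms, of M] False
      by (meson abs_ge_zero le_less_trans mult_nonneg_nonneg)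
    have "(\<lambda>i. sgn a * y i) \<in> Theta M" using Theta_scale[OF y(1)] by (simp add: abs_sgn_eq)
    moreover have "(\<lambda>i. a * x i) = (\<lambda>i. z * (sgn a * y i))"
      using y False by (auto simp: s_def fun_eq_iff sgn_if)
    ultimately show "normM M (\<lambda>i. a * x i) \<le> z" using normM_le zp by blast
  qed
qed

lemma normM_scale:
  assumes "x \<in> c00" shows "normM M (\<lambda>i. a * x i) = \<bar>a\<bar> * normM M x"
proof (cases "a = 0")
  case True then show ?thesis using normM_zero by simp
next
  case False
  have "normM M x = normM M (\<lambda>i. (1/a) * (a * x i))" using False by simp
  also have "\<dots> \<le> \<bar>1/a\<bar> * normM M (\<lambda>i. a * x i)"
    by (rule normM_scale_le[OF c00_scale[OF assms]])
  finally have "\<bar>a\<bar> * normM M x \<le> normM M (\<lambda>i. a * x i)" using False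
    by (simp add: field_simps)
  then show ?thesis using normM_scale_le[OF assms, of M a] by linarith
qed

lemma normM_triangle:
  assumes "x \<in> c00" "y \<in> c00"
  shows "normM M (\<lambda>i. x i + y i) \<le> normM M x + normM M y"
proof (rule dense_ge)
  fix z assume z: "normM M x + normM M y < z"
  define e where "e = z - normM M x - normM M y"
  have ep: "e > 0" using z by (simp add: e_def)
  define s where "s = normM M x + e/2"
  define t where "t = normM M y + e/2"
  obtain u where u: "u \<in> Theta M" "x = (\<lambda>i. s * u i)" using normM_lt[OF assms(1)] ep s_def by force
  obtain v where v: "v \<in> Theta M" "y = (\<lambda>i. t * v i)" using normM_lt[OF assms(2)] ep t_def by force
  have sp: "s > 0" using normM_nonneg[OF assms(1), of M] ep by (simp add: s_def)
  have tp: "t > 0" using normM_nonneg[OF assms(2), of M] ep by (simp add: t_def)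
  have zst: "z = s + t" by (simp add: s_def t_def e_def)
  have "(\<lambda>i. (s/z) * u i + (t/z) * v i) \<in> Theta M"
    by (rule Theta.absconv[OF u(1) v(1)]) (use sp tp zst in \<open>simp add: field_simps\<close>)
  moreover have "(\<lambda>i. x i + y i) = (\<lambda>i. z * ((s/z) * u i + (t/z) * v i))"
  proof
    fix i
    have zne: "z \<noteq> 0" using sp tp zst by simp
    have "z * ((s/z) * u i + (t/z) * v i) = s * u i + t * v i" using zne by (simp add: field_simps)
    then show "x i + y i = z * ((s/z) * u i + (t/z) * v i)" using u v by simp
  qed
  ultimately show "normM M (\<lambda>i. x i + y i) \<le> z" using normM_le sp tp zst by simp
qed

lemma normM_proj:
  assumes "x \<in> c00" shows "normM M (\<lambda>i. indicator E i * x i) \<le> normM M x"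
proof (rule dense_ge)
  fix s assume s: "normM M x < s"
  then obtain y where y: "y \<in> Theta M" "x = (\<lambda>i. s * y i)" using normM_lt assms by blast
  have sp: "s > 0" using normM_nonneg[OF assms, of M] s by simp
  have "(\<lambda>i. indicator E i * x i) = (\<lambda>i. s * (indicator E i * y i))" using y by auto
  then show "normM M (\<lambda>i. indicator E i * x i) \<le> s" using normM_le[OF sp Theta_proj[OF y(1)]] by simp
qed

lemma normM_l1:
  assumes "finite S" "supp_in S x" shows "normM M x \<le> (\<Sum>i\<in>S. \<bar>x i\<bar>)"
proof (rule dense_ge)
  fix z assume z: "(\<Sum>i\<in>S. \<bar>x i\<bar>) < z"
  have zp: "z > 0" using z by (meson le_less_trans sum_nonneg abs_ge_zero)
  have "(\<Sum>i\<in>S. \<bar>x i / z\<bar>) = (\<Sum>i\<in>S. \<bar>x i\<bar>) / z" using zp by (simp add: sum_divide_distrib)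
  also have "\<dots> \<le> 1" using z zp by simp
  finally have "(\<lambda>i. x i / z) \<in> Theta M"
    using Theta_l1[OF assms(1)] assms(2) by (auto simp: supp_in_def)
  moreover have "x = (\<lambda>i. z * (x i / z))" using zp by auto
  ultimately show "normM M x \<le> z" using normM_le zp by blast
qed




lemma supp_in_mono: "supp_in F x \<Longrightarrow> F \<subseteq> G \<Longrightarrow> supp_in G x"
  unfolding supp_in_def by auto

lemma sublin_zero:
  assumes "\<forall>x t. supp_in I x \<longrightarrow> 0 < t \<longrightarrow> p (\<lambda>i. t * x i) = t * p x"
  shows "p (\<lambda>_. 0) = 0"
proof -
  have "supp_in I (\<lambda>_. 0)" by (simp add: supp_in_def)
  then have "p (\<lambda>i. 2 * (0::real)) = 2 * p (\<lambda>_. 0)" using assms[rule_format, of "\<lambda>_. 0" 2] by simp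
  then show ?thesis by simp
qed

lemma hb0:
  assumes "finite I"
  shows "(\<forall>x y. supp_in I x \<longrightarrow> supp_in I y \<longrightarrow> p (\<lambda>i. x i + y i) \<le> p x + p y) \<Longrightarrow>
         (\<forall>x t. supp_in I x \<longrightarrow> 0 < t \<longrightarrow> p (\<lambda>i. t * x i) = t * p x) \<Longrightarrow>
         \<exists>w. \<forall>y. supp_in I y \<longrightarrow> (\<Sum>i\<in>I. w i * y i) \<le> p y"
  using assms
proof (induction I arbitrary: p rule: finite_induct)
  case empty
  have "p (\<lambda>_. 0) = 0" using sublin_zero[OF empty.prems(2)] .
  moreover have "supp_in {} y \<Longrightarrow> y = (\<lambda>_. 0)" for y by (auto simp: supp_in_def)
  ultimately show ?case by auto
next
  case (insert j F)
  note sub = insert.prems(1) and hom = insert.prems(2)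
  have sF: "supp_in F x \<Longrightarrow> supp_in (insert j F) x" for x by (auto simp: supp_in_def)
  have subF: "\<forall>x y. supp_in F x \<longrightarrow> supp_in F y \<longrightarrow> p (\<lambda>i. x i + y i) \<le> p x + p y"
    using sub sF by simp
  have homF: "\<forall>x t. supp_in F x \<longrightarrow> 0 < t \<longrightarrow> p (\<lambda>i. t * x i) = t * p x"
    using hom sF by simp
  obtain w where w: "\<And>y. supp_in F y \<Longrightarrow> (\<Sum>i\<in>F. w i * y i) \<le> p y"
    using insert.IH[OF subF homF] by blast
  define e where "e = unitvec j"
  have se: "supp_in (insert j F) e" by (auto simp: supp_in_def e_def unitvec_def)
  have sF2: "supp_in (insert j F) (\<lambda>i. v i + a * e i)" if "supp_in F v" for v a
    using that by (auto simp: supp_in_def e_def unitvec_def)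
  define L where "L = {p (\<lambda>i. v i + e i) - (\<Sum>i\<in>F. w i * v i) | v. supp_in F v}"
  have lower: "(\<Sum>i\<in>F. w i * v' i) - p (\<lambda>i. v' i - e i) \<le> p (\<lambda>i. v i + e i) - (\<Sum>i\<in>F. w i * v i)"
    if v: "supp_in F v" and v': "supp_in F v'" for v v'
  proof -
    have "(\<Sum>i\<in>F. w i * v' i) + (\<Sum>i\<in>F. w i * v i) = (\<Sum>i\<in>F. w i * (v' i + v i))"
      by (simp add: sum.distrib distrib_left)
    also have "\<dots> \<le> p (\<lambda>i. v' i + v i)"
    proof -
      have "supp_in F (\<lambda>i. v' i + v i)" using v v' by (auto simp: supp_in_def)
      from w[OF this] show ?thesis .
    qed
    also have "(\<lambda>i. v' i + v i) = (\<lambda>i. (v' i - e i) + (v i + e i))" by auto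
    also have "p (\<lambda>i. (v' i - e i) + (v i + e i)) \<le> p (\<lambda>i. v' i - e i) + p (\<lambda>i. v i + e i)"
    proof -
      have a: "supp_in (insert j F) (\<lambda>i. v' i - e i)" using sF2[OF v', of "-1"] by simp
      have b: "supp_in (insert j F) (\<lambda>i. v i + e i)" using sF2[OF v, of 1] by simp
      show ?thesis using sub a b by blast
    qed
    finally show ?thesis by simp
  qed
  have s0: "supp_in F (\<lambda>_. 0)" by (simp add: supp_in_def)
  have Lne: "L \<noteq> {}" using s0 unfolding L_def by blast
  have Lmem: "\<exists>v. supp_in F v \<and> z = p (\<lambda>i. v i + e i) - (\<Sum>i\<in>F. w i * v i)" if "z \<in> L" for z
    using that unfolding L_def by blast
  have Lge: "(\<Sum>i\<in>F. w i * v' i) - p (\<lambda>i. v' i - e i) \<le> z" if zL: "z \<in> L" and sv': "supp_in F v'" for z v'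
  proof -
    obtain v where v: "supp_in F v" "z = p (\<lambda>i. v i + e i) - (\<Sum>i\<in>F. w i * v i)"
      using Lmem[OF zL] by blast
    show ?thesis using lower[OF v(1) sv'] v(2) by simp
  qed
  have Lbdd: "bdd_below L" unfolding bdd_below_def using Lge s0 by blast
  define c where "c = Inf L"
  have c_le: "c \<le> p (\<lambda>i. v i + e i) - (\<Sum>i\<in>F. w i * v i)" if "supp_in F v" for v
  proof -
    have "p (\<lambda>i. v i + e i) - (\<Sum>i\<in>F. w i * v i) \<in> L" using that unfolding L_def by blast
    then show ?thesis unfolding c_def by (rule cInf_lower[OF _ Lbdd])
  qed
  have c_ge: "(\<Sum>i\<in>F. w i * v' i) - p (\<lambda>i. v' i - e i) \<le> c" if "supp_in F v'" for v'
    unfolding c_def by (rule cInf_greatest[OF Lne]) (rule Lge[OF _ that])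
  show ?case
  proof (intro exI allI impI)
    fix y assume y: "supp_in (insert j F) y"
    define v where "v = (\<lambda>i. if i = j then 0 else y i)"
    define t where "t = y j"
    have v: "supp_in F v" using y by (auto simp: supp_in_def v_def)
    have yv: "y = (\<lambda>i. v i + t * e i)" by (auto simp: v_def t_def e_def unitvec_def)
    have sumeq: "(\<Sum>i\<in>insert j F. (w(j := c)) i * y i) = c * t + (\<Sum>i\<in>F. w i * v i)"
    proof -
      have "(\<Sum>i\<in>insert j F. (w(j := c)) i * y i) = c * y j + (\<Sum>i\<in>F. (w(j := c)) i * y i)"
        using insert.hyps by simp
      also have "(\<Sum>i\<in>F. (w(j := c)) i * y i) = (\<Sum>i\<in>F. w i * v i)"
        using insert.hyps by (intro sum.cong) (auto simp: v_def)
      finally show ?thesis by (simp add: t_def)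
    qed
    have Wv: "(\<Sum>i\<in>F. w i * (v i / r)) = (\<Sum>i\<in>F. w i * v i) / r" for r
      by (simp add: sum_divide_distrib)
    have vr: "supp_in F (\<lambda>i. v i / r)" for r using v by (auto simp: supp_in_def)
    consider "t = 0" | "t > 0" | "t < 0" by linarith
    then show "(\<Sum>i\<in>insert j F. (w(j := c)) i * y i) \<le> p y"
    proof cases
      case 1
      then have "y = v" using yv by simp
      then show ?thesis using sumeq 1 w[OF v] by simp
    next
      case 2
      have "c \<le> p (\<lambda>i. v i / t + e i) - (\<Sum>i\<in>F. w i * v i) / t"
        using c_le[OF vr[of t]] Wv by simp
      then have "c * t \<le> t * p (\<lambda>i. v i / t + e i) - (\<Sum>i\<in>F. w i * v i)"
        using 2 by (simp add: field_simps)
      moreover have "p y = t * p (\<lambda>i. v i / t + e i)"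
      proof -
        have "y = (\<lambda>i. t * (v i / t + e i))"
        proof
          fix i show "y i = t * (v i / t + e i)" using 2 by (subst yv) (simp add: distrib_left)
        qed
        then show ?thesis using hom sF2[OF vr[of t], of 1] 2 by simp
      qed
      ultimately show ?thesis using sumeq by simp
    next
      case 3
      define s where "s = - t"
      have sp: "s > 0" using 3 by (simp add: s_def)
      have "(\<Sum>i\<in>F. w i * v i) / s - p (\<lambda>i. v i / s - e i) \<le> c"
        using c_ge[OF vr[of s]] Wv by simp
      then have "(\<Sum>i\<in>F. w i * v i) - s * p (\<lambda>i. v i / s - e i) \<le> s * c"
        using sp by (simp add: field_simps)
      moreover have "p y = s * p (\<lambda>i. v i / s - e i)"
      proof -
        have "y = (\<lambda>i. s * (v i / s + (-1) * e i))"
        proof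
          fix i show "y i = s * (v i / s + (-1) * e i)" using sp by (subst yv) (simp add: s_def algebra_simps)
        qed
        then show ?thesis using hom sF2[OF vr[of s], of "-1"] sp by simp
      qed
      moreover have "c * t = - (s * c)" by (simp add: s_def)
      ultimately show ?thesis using sumeq by linarith
    qed
  qed
qed





lemma hb:
  assumes fin: "finite I"
    and sub: "\<forall>x y. supp_in I x \<longrightarrow> supp_in I y \<longrightarrow> p (\<lambda>i. x i + y i) \<le> p x + p y"
    and hom: "\<forall>x t. supp_in I x \<longrightarrow> 0 < t \<longrightarrow> p (\<lambda>i. t * x i) = t * p x"
    and x0: "supp_in I x0"
  shows "\<exists>w. (\<forall>y. supp_in I y \<longrightarrow> (\<Sum>i\<in>I. w i * y i) \<le> p y) \<and> (\<Sum>i\<in>I. w i * x0 i) = p x0"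
proof -
  have p0: "p (\<lambda>_. 0) = 0" using sublin_zero[OF hom] .
  have hom0: "p (\<lambda>i. t * x i) = t * p x" if "supp_in I x" "t \<ge> 0" for x t
  proof (cases "t = 0")
    case True then show ?thesis using p0 by simp
  next
    case False then show ?thesis using hom that by simp
  qed
  have sc: "supp_in I (\<lambda>i. y i + t * x0 i)" if "supp_in I y" for y t
    using that x0 by (auto simp: supp_in_def)
  have sneg: "supp_in I (\<lambda>i. - y i)" if "supp_in I y" for y using that by (auto simp: supp_in_def)
  have sadd: "supp_in I (\<lambda>i. y i + z i)" if "supp_in I y" "supp_in I z" for y z
    using that by (auto simp: supp_in_def)
  have ssc: "supp_in I (\<lambda>i. a * y i)" if "supp_in I y" for y a using that by (auto simp: supp_in_def)
  define Q where "Q y = {p (\<lambda>i. y i + t * x0 i) - t * p x0 | t. t \<ge> 0}" for y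
  define p1 where "p1 y = Inf (Q y)" for y
  have lowb: "- p (\<lambda>i. - y i) \<le> p (\<lambda>i. y i + t * x0 i) - t * p x0" if "supp_in I y" "t \<ge> 0" for y t
  proof -
    have "t * p x0 = p (\<lambda>i. t * x0 i)" using hom0[OF x0 that(2)] by simp
    also have "(\<lambda>i. t * x0 i) = (\<lambda>i. (y i + t * x0 i) + (- y i))" by auto
    also have "p \<dots> \<le> p (\<lambda>i. y i + t * x0 i) + p (\<lambda>i. - y i)"
      using sub sc[OF that(1)] sneg[OF that(1)] by blast
    finally show ?thesis by simp
  qed
  have Qne: "Q y \<noteq> {}" for y unfolding Q_def by auto
  have Qbdd: "bdd_below (Q y)" if "supp_in I y" for y
    unfolding Q_def bdd_below_def using lowb[OF that] by blast
  have p1_le: "p1 y \<le> p (\<lambda>i. y i + t * x0 i) - t * p x0" if "supp_in I y" "t \<ge> 0" for y t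
    unfolding p1_def by (rule cInf_lower[OF _ Qbdd[OF that(1)]]) (use that in \<open>auto simp: Q_def\<close>)
  have p1_ge: "z \<le> p1 y" if "\<And>t. t \<ge> 0 \<Longrightarrow> z \<le> p (\<lambda>i. y i + t * x0 i) - t * p x0" for y z
    unfolding p1_def by (rule cInf_greatest[OF Qne]) (use that in \<open>auto simp: Q_def\<close>)
  have p1_p: "p1 y \<le> p y" if "supp_in I y" for y using p1_le[OF that, of 0] by simp
  have sub1: "\<forall>y z. supp_in I y \<longrightarrow> supp_in I z \<longrightarrow> p1 (\<lambda>i. y i + z i) \<le> p1 y + p1 z"
  proof (intro allI impI)
    fix y z assume y: "supp_in I y" and z: "supp_in I z"
    have key: "p1 (\<lambda>i. y i + z i) \<le> (p (\<lambda>i. y i + t * x0 i) - t * p x0) + (p (\<lambda>i. z i + s * x0 i) - s * p x0)"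
      if "t \<ge> 0" "s \<ge> 0" for t s
    proof -
      have "p1 (\<lambda>i. y i + z i) \<le> p (\<lambda>i. (y i + z i) + (t + s) * x0 i) - (t + s) * p x0"
        using p1_le[OF sadd[OF y z], of "t + s"] that by simp
      also have "(\<lambda>i. (y i + z i) + (t + s) * x0 i) = (\<lambda>i. (y i + t * x0 i) + (z i + s * x0 i))"
        by (auto simp: algebra_simps)
      also have "p \<dots> \<le> p (\<lambda>i. y i + t * x0 i) + p (\<lambda>i. z i + s * x0 i)"
        using sub sc[OF y] sc[OF z] by blast
      finally show ?thesis by (simp add: algebra_simps)
    qed
    have "p1 (\<lambda>i. y i + z i) - (p (\<lambda>i. z i + s * x0 i) - s * p x0) \<le> p1 y" if "s \<ge> 0" for s
      by (rule p1_ge) (use key that in force)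
    then have "p1 (\<lambda>i. y i + z i) - p1 y \<le> p1 z"
      by (intro p1_ge) (smt (verit))
    then show "p1 (\<lambda>i. y i + z i) \<le> p1 y + p1 z" by simp
  qed
  have hom1: "\<forall>y a. supp_in I y \<longrightarrow> 0 < a \<longrightarrow> p1 (\<lambda>i. a * y i) = a * p1 y"
  proof (intro allI impI)
    fix y and a :: real assume y: "supp_in I y" and a: "0 < a"
    have e1: "p (\<lambda>i. a * y i + (a * t) * x0 i) = a * p (\<lambda>i. y i + t * x0 i)" for t
    proof -
      have "(\<lambda>i. a * y i + (a * t) * x0 i) = (\<lambda>i. a * (y i + t * x0 i))" by (auto simp: algebra_simps)
      then show ?thesis using hom sc[OF y] a by simp
    qed
    have "p1 (\<lambda>i. a * y i) / a \<le> p (\<lambda>i. y i + t * x0 i) - t * p x0" if "t \<ge> 0" for t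
    proof -
      have "p1 (\<lambda>i. a * y i) \<le> p (\<lambda>i. a * y i + (a * t) * x0 i) - (a * t) * p x0"
        using p1_le[OF ssc[OF y], of "a * t"] that a by simp
      also have "\<dots> = a * (p (\<lambda>i. y i + t * x0 i) - t * p x0)"
        by (simp only: e1[of t]) (simp add: algebra_simps)
      finally show ?thesis using a by (simp add: field_simps)
    qed
    then have le1: "p1 (\<lambda>i. a * y i) / a \<le> p1 y" by (rule p1_ge)
    have "a * p1 y \<le> p (\<lambda>i. a * y i + t * x0 i) - t * p x0" if "t \<ge> 0" for t
    proof -
      have "p1 y \<le> p (\<lambda>i. y i + (t/a) * x0 i) - (t/a) * p x0" using p1_le[OF y, of "t/a"] that a by simp
      then have "a * p1 y \<le> a * (p (\<lambda>i. y i + (t/a) * x0 i) - (t/a) * p x0)" using a by simp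
      also have "\<dots> = p (\<lambda>i. a * y i + t * x0 i) - t * p x0"
      proof -
        have at: "a * (t / a) = t" using a by simp
        have "p (\<lambda>i. a * y i + t * x0 i) = a * p (\<lambda>i. y i + (t/a) * x0 i)"
          using e1[of "t/a"] unfolding at .
        then show ?thesis using a by (simp add: algebra_simps)
      qed
      finally show ?thesis .
    qed
    then have le2: "a * p1 y \<le> p1 (\<lambda>i. a * y i)" by (rule p1_ge)
    show "p1 (\<lambda>i. a * y i) = a * p1 y" using le1 le2 a by (simp add: field_simps)
  qed
  obtain w where w: "\<And>y. supp_in I y \<Longrightarrow> (\<Sum>i\<in>I. w i * y i) \<le> p1 y"
    using hb0[OF fin sub1 hom1] by blast
  have "(\<Sum>i\<in>I. w i * (- x0 i)) \<le> p1 (\<lambda>i. - x0 i)" using w[OF sneg[OF x0]] by simp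
  also have "\<dots> \<le> p (\<lambda>i. - x0 i + 1 * x0 i) - 1 * p x0" using p1_le[OF sneg[OF x0], of 1] by simp
  also have "\<dots> = - p x0" using p0 by simp
  finally have ge: "p x0 \<le> (\<Sum>i\<in>I. w i * x0 i)" by (simp add: sum_negf)
  have le: "(\<Sum>i\<in>I. w i * x0 i) \<le> p x0" using w[OF x0] p1_p[OF x0] by simp
  show ?thesis using w p1_p ge le by (intro exI[of _ w]) force
qed



lemma net:
  assumes fin: "finite I"
    and sub: "\<forall>x y. supp_in I x \<longrightarrow> supp_in I y \<longrightarrow> p (\<lambda>i. x i + y i) \<le> p x + p y"
    and hom: "\<forall>x t. supp_in I x \<longrightarrow> 0 < t \<longrightarrow> p (\<lambda>i. t * x i) = t * p x"
    and sym: "\<forall>x. supp_in I x \<longrightarrow> p (\<lambda>i. - x i) = p x"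
    and lo: "\<forall>x i. supp_in I x \<longrightarrow> \<bar>x i\<bar> \<le> p x"
    and up: "\<forall>x. supp_in I x \<longrightarrow> p x \<le> (\<Sum>i\<in>I. \<bar>x i\<bar>)"
  shows "\<exists>ws. (\<forall>w\<in>set ws. \<forall>x. supp_in I x \<longrightarrow> \<bar>\<Sum>i\<in>I. w i * x i\<bar> \<le> p x) \<and>
              (\<forall>x. supp_in I x \<longrightarrow> (\<exists>w\<in>set ws. p x \<le> 2 * \<bar>\<Sum>i\<in>I. w i * x i\<bar>))"
proof -
  define d where "d = card I"
  define \<delta> :: real where "\<delta> = 1 / (4 * (real d + 1))"
  have dp: "\<delta> > 0" by (simp add: \<delta>_def)
  have dd: "real d * \<delta> \<le> 1/4" by (simp add: \<delta>_def field_simps)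
  define K :: nat where "K = nat (ceiling (1/\<delta>)) + 1"
  define Vals where "Vals = (\<lambda>k::int. \<delta> * of_int k) ` {- int K..int K}"
  define ext where "ext h = (\<lambda>i. if i \<in> I then h i else (0::real))" for h :: "nat \<Rightarrow> real"
  define G where "G = ext ` (PiE I (\<lambda>_. Vals))"
  have finG: "finite G" unfolding G_def Vals_def by (intro finite_imageI finite_PiE fin) auto
  have Gsupp: "supp_in I g" if "g \<in> G" for g using that by (auto simp: G_def ext_def supp_in_def)
  define good where "good g w \<longleftrightarrow> (\<forall>y. supp_in I y \<longrightarrow> (\<Sum>i\<in>I. w i * y i) \<le> p y) \<and> (\<Sum>i\<in>I. w i * g i) = p g"
    for g w
  define wsel where "wsel g = (SOME w. good g w)" for g
  have wgood: "good g (wsel g)" if "g \<in> G" for g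
  proof -
    have "\<exists>w. good g w" using hb[OF fin sub hom Gsupp[OF that]] by (simp add: good_def)
    then show ?thesis unfolding wsel_def by (rule someI_ex)
  qed
  obtain gl where gl: "set gl = G" using finite_list[OF finG] by blast
  define ws where "ws = map wsel gl"
  have p0: "p (\<lambda>_. 0) = 0" using sublin_zero[OF hom] .
  have P1: "\<bar>\<Sum>i\<in>I. w i * x i\<bar> \<le> p x" if wws: "w \<in> set ws" and sxx: "supp_in I x" for w x
  proof -
    obtain g where g: "g \<in> G" "w = wsel g" using wws gl by (auto simp: ws_def)
    have sx: "supp_in I (\<lambda>i. - x i)" using sxx by (auto simp: supp_in_def)
    have gw: "\<forall>y. supp_in I y \<longrightarrow> (\<Sum>i\<in>I. w i * y i) \<le> p y"
      using wgood[OF g(1)] g(2) by (simp add: good_def)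
    have a: "(\<Sum>i\<in>I. w i * x i) \<le> p x" using gw sxx by blast
    have "(\<Sum>i\<in>I. w i * (- x i)) \<le> p (\<lambda>i. - x i)" using gw[rule_format, OF sx] .
    then have b: "- (\<Sum>i\<in>I. w i * x i) \<le> p x" using sym sxx by (simp add: sum_negf)
    show ?thesis using a b by linarith
  qed
  have zG: "(\<lambda>_. 0) \<in> G"
  proof -
    have "(\<lambda>i\<in>I. 0::real) \<in> PiE I (\<lambda>_. Vals)" by (auto simp: Vals_def image_iff intro!: bexI[of _ 0])
    moreover have "ext (\<lambda>i\<in>I. 0) = (\<lambda>_. 0)" by (auto simp: ext_def)
    ultimately show ?thesis unfolding G_def by (metis image_eqI)
  qed
  have P2: "\<exists>w\<in>set ws. p x \<le> 2 * \<bar>\<Sum>i\<in>I. w i * x i\<bar>" if x: "supp_in I x" for x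
  proof (cases "p x = 0")
    case True
    have "wsel (\<lambda>_. 0) \<in> set ws" using zG gl by (auto simp: ws_def)
    then show ?thesis using True by force
  next
    case False
    have pnn: "p x \<ge> 0" using lo x by (meson abs_ge_zero order_trans)
    define r where "r = p x"
    have rp: "r > 0" using pnn False by (simp add: r_def)
    define u where "u = (\<lambda>i. (1/r) * x i)"
    have su: "supp_in I u" using x by (auto simp: u_def supp_in_def)
    have "p u = (1/r) * p x" unfolding u_def using hom[rule_format, OF x, of "1/r"] rp by simp
    then have pu: "p u = 1" using rp by (simp add: r_def)
    have ub: "\<bar>u i\<bar> \<le> 1" for i using lo[rule_format, OF su, of i] pu by simp
    define g where "g = ext (\<lambda>i. \<delta> * of_int (round (u i / \<delta>)))"
    have gdiff: "\<bar>u i - g i\<bar> \<le> \<delta>" if "i \<in> I" for i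
    proof -
      have "\<bar>u i / \<delta> - of_int (round (u i / \<delta>))\<bar> \<le> 1/2"
        using of_int_round_le[of "u i / \<delta>"] of_int_round_ge[of "u i / \<delta>"] by linarith
      then have "\<bar>u i - \<delta> * of_int (round (u i / \<delta>))\<bar> \<le> \<delta> / 2"
        using dp by (simp add: field_simps abs_le_iff)
      then show ?thesis using that dp by (simp add: g_def ext_def)
    qed
    have gG: "g \<in> G"
    proof -
      have "(\<lambda>i\<in>I. \<delta> * of_int (round (u i / \<delta>))) \<in> PiE I (\<lambda>_. Vals)"
      proof (rule restrict_PiE_iff[THEN iffD2], intro ballI)
        fix i assume "i \<in> I"
        have "\<bar>u i / \<delta>\<bar> \<le> 1/\<delta>" using ub[of i] dp by (simp add: abs_div divide_right_mono)
        moreover have "1/\<delta> \<le> real K - 1" unfolding K_def using real_nat_ceiling_ge[of "1/\<delta>"] by simp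
        ultimately have "\<bar>of_int (round (u i / \<delta>))\<bar> \<le> real K"
          using of_int_round_le[of "u i / \<delta>"] of_int_round_ge[of "u i / \<delta>"] by linarith
        then have "\<bar>round (u i / \<delta>)\<bar> \<le> int K"
          by (metis of_int_abs of_int_le_iff of_int_of_nat_eq)
        then have "round (u i / \<delta>) \<in> {- int K..int K}" by (simp add: abs_le_iff)
        then show "\<delta> * of_int (round (u i / \<delta>)) \<in> Vals" unfolding Vals_def by blast
      qed
      moreover have "ext (\<lambda>i\<in>I. \<delta> * of_int (round (u i / \<delta>))) = g" by (auto simp: g_def ext_def)
      ultimately show ?thesis unfolding G_def by (metis image_eqI)
    qed
    have sg: "supp_in I g" using Gsupp[OF gG] .
    have sug: "supp_in I (\<lambda>i. u i - g i)" using su sg by (auto simp: supp_in_def)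
    have pug: "p (\<lambda>i. u i - g i) \<le> 1/4"
    proof -
      have "p (\<lambda>i. u i - g i) \<le> (\<Sum>i\<in>I. \<bar>u i - g i\<bar>)" using up sug by blast
      also have "\<dots> \<le> (\<Sum>i\<in>I. \<delta>)" using gdiff by (intro sum_mono) auto
      also have "\<dots> = real d * \<delta>" by (simp add: d_def)
      finally show ?thesis using dd by simp
    qed
    have pgu: "p (\<lambda>i. g i - u i) \<le> 1/4"
    proof -
      have "(\<lambda>i. g i - u i) = (\<lambda>i. - (u i - g i))" by auto
      moreover have "p (\<lambda>i. - (u i - g i)) = p (\<lambda>i. u i - g i)" using sym[rule_format, OF sug] .
      ultimately show ?thesis using pug by simp
    qed
    have "p u \<le> p g + p (\<lambda>i. u i - g i)"
    proof -
      have "(\<lambda>i. g i + (u i - g i)) = u" by auto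
      moreover have "p (\<lambda>i. g i + (u i - g i)) \<le> p g + p (\<lambda>i. u i - g i)"
        using sub[rule_format, OF sg sug] .
      ultimately show ?thesis by simp
    qed
    then have pg: "p g \<ge> 3/4" using pu pug by simp
    define w where "w = wsel g"
    have wg: "good g w" using wgood[OF gG] by (simp add: w_def)
    have "(\<Sum>i\<in>I. w i * (g i - u i)) \<le> p (\<lambda>i. g i - u i)"
    proof -
      have sgu: "supp_in I (\<lambda>i. g i - u i)" using su sg by (auto simp: supp_in_def)
      have "\<forall>y. supp_in I y \<longrightarrow> (\<Sum>i\<in>I. w i * y i) \<le> p y" using wg by (simp add: good_def)
      from this[rule_format, OF sgu] show ?thesis .
    qed
    moreover have "(\<Sum>i\<in>I. w i * (g i - u i)) = (\<Sum>i\<in>I. w i * g i) - (\<Sum>i\<in>I. w i * u i)"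
      by (simp add: right_diff_distrib sum_subtractf)
    moreover have "(\<Sum>i\<in>I. w i * g i) = p g" using wg by (simp add: good_def)
    ultimately have wu: "(\<Sum>i\<in>I. w i * u i) \<ge> 1/2" using pg pgu by linarith
    have "(\<Sum>i\<in>I. w i * u i) = (1/r) * (\<Sum>i\<in>I. w i * x i)"
      unfolding u_def sum_distrib_left by (intro sum.cong) auto
    then have wx: "(\<Sum>i\<in>I. w i * x i) = r * (\<Sum>i\<in>I. w i * u i)" using rp by simp
    have "r * (1/2) \<le> r * (\<Sum>i\<in>I. w i * u i)" using wu rp by (intro mult_left_mono) auto
    then have "r \<le> 2 * (\<Sum>i\<in>I. w i * x i)" using wx by linarith
    moreover have "w \<in> set ws" using gG gl by (auto simp: ws_def w_def)
    ultimately show ?thesis by (intro bexI[of _ w]) (auto simp: r_def)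
  qed
  show ?thesis using P1 P2 by blast
qed





definition st :: "(nat \<Rightarrow> nat) \<Rightarrow> nat \<Rightarrow> nat" where
  "st a n = (case n of 0 \<Rightarrow> 0 | Suc m \<Rightarrow> a m)"

definition blk :: "(nat \<Rightarrow> nat) \<Rightarrow> nat \<Rightarrow> nat set" where
  "blk a n = {st a n..<a n}"

definition Pb :: "(nat \<Rightarrow> nat) \<Rightarrow> nat \<Rightarrow> (nat \<Rightarrow> real) \<Rightarrow> nat \<Rightarrow> real" where
  "Pb a n x = (\<lambda>i. indicator (blk a n) i * x i)"

lemma st_Suc[simp]: "st a (Suc m) = a m" by (simp add: st_def)
lemma st_0[simp]: "st a 0 = 0" by (simp add: st_def)

lemma st_le: "strict_mono a \<Longrightarrow> st a n \<le> a n"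
  by (cases n) (auto simp: strict_mono_def less_imp_le)

lemma blk_finite[simp]: "finite (blk a n)" by (simp add: blk_def)

lemma blk_ex: assumes "strict_mono a" shows "\<exists>n. i \<in> blk a n"
proof -
  have "Suc i \<le> a (Suc i)" using seq_suble[OF assms] .
  then have ex: "\<exists>n. i < a n" by (intro exI[of _ "Suc i"]) simp
  define n where "n = (LEAST n. i < a n)"
  have lt: "i < a n" unfolding n_def by (rule LeastI_ex[OF ex])
  have "st a n \<le> i"
  proof (cases n)
    case 0 then show ?thesis by simp
  next
    case (Suc m)
    have "\<not> i < a m" using not_less_Least[of m "\<lambda>n. i < a n"] Suc n_def by simp
    then show ?thesis using Suc by simp
  qed
  then show ?thesis using lt by (auto simp: blk_def)
qed

lemma blk_uniq:
  assumes sm: "strict_mono a" and i: "i \<in> blk a n" "i \<in> blk a m" shows "n = m"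
proof (rule ccontr)
  assume "n \<noteq> m"
  then consider "n < m" | "m < n" by linarith
  then show False
  proof cases
    case 1
    then obtain m' where m': "m = Suc m'" "n \<le> m'" by (cases m) auto
    have "a n \<le> a m'" using m'(2) sm by (simp add: strict_mono_less_eq)
    then show False using i m' by (auto simp: blk_def)
  next
    case 2
    then obtain n' where n': "n = Suc n'" "m \<le> n'" by (cases n) auto
    have "a m \<le> a n'" using n'(2) sm by (simp add: strict_mono_less_eq)
    then show False using i n' by (auto simp: blk_def)
  qed
qed

lemma c00_bound:
  fixes a :: "nat \<Rightarrow> nat"
  assumes sm: "strict_mono a" and x: "x \<in> c00"
  shows "\<exists>K. \<forall>i. x i \<noteq> 0 \<longrightarrow> i < a K"
proof -
  obtain B where B: "{i. x i \<noteq> 0} \<subseteq> {..<B}" using x finite_nat_bounded unfolding c00_def by blast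
  have "B \<le> a B" using seq_suble[OF sm] .
  then show ?thesis using B by (intro exI[of _ B]) auto
qed

lemma Pb_vanish:
  fixes a :: "nat \<Rightarrow> nat"
  assumes sm: "strict_mono a" and K: "\<forall>i. x i \<noteq> 0 \<longrightarrow> i < a K" and n: "K < n"
  shows "Pb a n x = (\<lambda>_. 0)"
proof
  fix i
  obtain n' where n': "n = Suc n'" "K \<le> n'" using n by (cases n) auto
  have "a K \<le> a n'" using n'(2) sm by (simp add: strict_mono_less_eq)
  then show "Pb a n x i = 0" using K n' by (auto simp: Pb_def blk_def indicator_def)
qed

lemma Pb_c00: "x \<in> c00 \<Longrightarrow> Pb a n x \<in> c00"
  unfolding Pb_def by (rule c00_proj)

lemma Pb_supp: "supp_in (blk a n) (Pb a n x)"
  by (auto simp: supp_in_def Pb_def)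

lemma decomp:
  assumes sm: "strict_mono a" and aF: "range a \<subseteq> F" and FM: "F \<in> M"
    and x: "x \<in> c00" and m: "\<forall>n. normM M (Pb a n x) \<le> m"
  shows "normM M x \<le> 3 * m"
proof -
  have m0: "0 \<le> m" using m normM_nonneg[OF Pb_c00[OF x], of M a 0] by (meson order_trans)
  obtain K where K: "\<forall>i. x i \<noteq> 0 \<longrightarrow> i < a K" using c00_bound[OF sm x] by blast
  show ?thesis
  proof (rule dense_ge)
    fix r assume r: "3 * m < r"
    define s where "s = r / 3"
    have sm': "m < s" using r by (simp add: s_def)
    have sp: "s > 0" using m0 sm' by simp
    have rp: "r > 0" using sp by (simp add: s_def)
    define yn where "yn n = (\<lambda>i. Pb a n x i / s)" for n
    have yn: "yn n \<in> Theta M" for n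
    proof -
      have "normM M (Pb a n x) < s" using m sm' by (meson le_less_trans)
      then obtain y where y: "y \<in> Theta M" "Pb a n x = (\<lambda>i. s * y i)" using normM_lt[OF Pb_c00[OF x]] by blast
      have "yn n = y" using y(2) sp by (auto simp: yn_def fun_eq_iff)
      then show ?thesis using y(1) by simp
    qed
    define Es where "Es = map (\<lambda>k. blk a (Suc k)) [0..<K]"
    define xs where "xs = map (\<lambda>k. yn (Suc k)) [0..<K]"
    have Esk: "Es ! k = {a k..<a (Suc k)}" if "k < K" for k using that by (simp add: Es_def blk_def)
    have lenEs: "length Es = K" by (simp add: Es_def)
    have adm: "admissible M Es"
      unfolding admissible_def
    proof (intro conjI)
      show "\<forall>k<length Es. finite (Es ! k) \<and> Es ! k \<noteq> {}"
        using Esk lenEs sm by (auto simp: strict_mono_def)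
    next
      show "\<forall>k. Suc k < length Es \<longrightarrow> (\<forall>a\<in>Es ! k. \<forall>b\<in>Es ! Suc k. a < b)"
        using Esk lenEs by auto
    next
      show "\<exists>ms F. length ms = length Es \<and> F \<in> M \<and> set ms \<subseteq> F \<and>
        (\<forall>k<length Es. \<forall>j\<in>Es ! k. ms ! k \<le> j) \<and>
        (\<forall>k. Suc k < length Es \<longrightarrow> (\<forall>j\<in>Es ! k. j < ms ! Suc k))"
        using Esk lenEs aF FM by (intro exI[of _ "map a [0..<K]"] exI[of _ F]) auto
    qed
    define z where "z = (\<lambda>i. (1/2) * (\<Sum>k < length Es. indicator (Es!k) i * (xs!k) i))"
    have zT: "z \<in> Theta M" unfolding z_def
      by (rule Theta.admis[OF adm]) (auto simp: xs_def Es_def yn)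
    define wv where "wv = (\<lambda>i. (1/3) * yn 0 i + (2/3) * z i)"
    have wvT: "wv \<in> Theta M" unfolding wv_def by (rule Theta.absconv[OF yn zT]) simp
    have xeq: "x = (\<lambda>i. r * wv i)"
    proof
      fix i
      have zi: "z i = (1/2) * (\<Sum>k<K. indicator (blk a (Suc k)) i * yn (Suc k) i)"
        unfolding z_def lenEs by (simp add: Es_def xs_def)
      show "x i = r * wv i"
      proof (cases "x i = 0")
        case True
        then have "yn n i = 0" for n by (simp add: yn_def Pb_def)
        then show ?thesis using True by (simp add: wv_def zi)
      next
        case False
        then have iK: "i < a K" using K by blast
        obtain n where n: "i \<in> blk a n" using blk_ex[OF sm] by blast
        show ?thesis
        proof (cases n)
          case 0
          have "i \<notin> blk a (Suc k)" for k using blk_uniq[OF sm n] 0 by blast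
          then have "z i = 0" by (simp add: zi)
          moreover have "yn 0 i = x i / s" using n 0 by (simp add: yn_def Pb_def)
          ultimately show ?thesis using rp by (simp add: wv_def s_def)
        next
          case (Suc k0)
          have "a k0 \<le> i" using n Suc by (simp add: blk_def)
          then have "a k0 < a K" using iK by simp
          then have k0K: "k0 < K" using sm by (simp add: strict_mono_less)
          have "(\<Sum>k<K. indicator (blk a (Suc k)) i * yn (Suc k) i) =
                indicator (blk a (Suc k0)) i * yn (Suc k0) i"
          proof (rule sum_single[OF k0K])
            fix k assume "k < K" "k \<noteq> k0"
            then have "i \<notin> blk a (Suc k)" using blk_uniq[OF sm n] Suc by blast
            then show "indicator (blk a (Suc k)) i * yn (Suc k) i = 0" by simp
          qed
          moreover have "yn (Suc k0) i = x i / s" using n Suc by (simp add: yn_def Pb_def)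
          moreover have "yn 0 i = 0"
          proof -
            have "i \<notin> blk a 0" using blk_uniq[OF sm n] Suc by blast
            then show ?thesis by (simp add: yn_def Pb_def)
          qed
          ultimately show ?thesis using n Suc rp by (simp add: wv_def zi s_def)
        qed
      qed
    qed
    show "normM M x \<le> r" using normM_le[OF _ wvT xeq] sp by (simp add: s_def)
  qed
qed


definition emb :: "(nat \<Rightarrow> nat) \<Rightarrow> nat \<Rightarrow> (nat \<Rightarrow> real) \<Rightarrow> nat \<Rightarrow> real" where
  "emb a n w = (\<lambda>i. if i \<in> blk a n then w (i - st a n) else 0)"

lemma emb_supp: "supp_in (blk a n) (emb a n w)" by (auto simp: supp_in_def emb_def)
lemma emb_c00: "emb a n w \<in> c00" using c00_supp[OF blk_finite emb_supp] .
lemma emb_scale: "emb a n (\<lambda>j. c * w j) = (\<lambda>i. c * emb a n w i)" by (auto simp: emb_def)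
lemma emb_add: "emb a n (\<lambda>j. w j + v j) = (\<lambda>i. emb a n w i + emb a n v i)" by (auto simp: emb_def)
lemma emb_zero: "emb a n (\<lambda>_. 0) = (\<lambda>_. 0)" by (auto simp: emb_def)
lemma emb_at: "strict_mono a \<Longrightarrow> j < a n - st a n \<Longrightarrow> emb a n w (st a n + j) = w j"
  by (auto simp: emb_def blk_def)
lemma emb_other: "strict_mono a \<Longrightarrow> i \<in> blk a m \<Longrightarrow> m \<noteq> n \<Longrightarrow> emb a n w i = 0"
  using blk_uniq by (fastforce simp: emb_def)

lemma emb_T1:
  assumes sm: "strict_mono a"
  shows "emb a n (\<lambda>j. if j < a n - st a n then x (st a n + j) else 0) = Pb a n x"
proof
  fix i
  show "emb a n (\<lambda>j. if j < a n - st a n then x (st a n + j) else 0) i = Pb a n x i"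
  proof (cases "i \<in> blk a n")
    case True
    then have "st a n \<le> i" "i < a n" by (auto simp: blk_def)
    then show ?thesis using True by (simp add: emb_def Pb_def)
  next
    case False then show ?thesis by (simp add: emb_def Pb_def)
  qed
qed

lemma fd_emb:
  fixes a :: "nat \<Rightarrow> nat"
  assumes sm: "strict_mono a"
  shows "fd_norm (a n - st a n) (\<lambda>w. normM M (emb a n w))"
  unfolding fd_norm_def
proof (intro conjI allI impI)
  fix w :: "nat \<Rightarrow> real" assume w: "\<forall>i\<ge>a n - st a n. w i = 0"
  show "0 \<le> normM M (emb a n w)" by (rule normM_nonneg[OF emb_c00])
  show "normM M (emb a n w) = 0 \<longleftrightarrow> w = (\<lambda>_. 0)"
  proof
    assume z: "normM M (emb a n w) = 0"
    show "w = (\<lambda>_. 0)"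
    proof
      fix j
      show "w j = 0"
      proof (cases "j < a n - st a n")
        case True
        have "\<bar>emb a n w (st a n + j)\<bar> \<le> 0" using normM_abs_le[OF emb_c00[of a n w], where i="st a n + j" and M=M] z by simp
        then show ?thesis using emb_at[OF sm True] by simp
      next
        case False then show ?thesis using w by simp
      qed
    qed
  next
    assume "w = (\<lambda>_. 0)"
    then show "normM M (emb a n w) = 0" by (simp add: emb_zero normM_zero)
  qed
next
  fix w :: "nat \<Rightarrow> real" and c :: real
  show "normM M (emb a n (\<lambda>i. c * w i)) = \<bar>c\<bar> * normM M (emb a n w)"
    unfolding emb_scale by (rule normM_scale[OF emb_c00])
next
  fix w v :: "nat \<Rightarrow> real"
  show "normM M (emb a n (\<lambda>i. w i + v i)) \<le> normM M (emb a n w) + normM M (emb a n v)"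
    unfolding emb_add by (rule normM_triangle[OF emb_c00 emb_c00])
qed

lemma Pb_le: "x \<in> c00 \<Longrightarrow> normM M (Pb a n x) \<le> normM M x"
  unfolding Pb_def by (rule normM_proj)

lemma Pb_eventually:
  assumes sm: "strict_mono a" and x: "x \<in> c00"
  shows "(\<lambda>n. normM M (Pb a n x)) \<longlonglongrightarrow> 0"
proof -
  obtain K where K: "\<forall>i. x i \<noteq> 0 \<longrightarrow> i < a K" using c00_bound[OF sm x] by blast
  have "\<forall>\<^sub>F n in sequentially. normM M (Pb a n x) = 0"
    by (rule eventually_sequentiallyI[of "Suc K"]) (simp add: Pb_vanish[OF sm K] normM_zero)
  then show ?thesis by (rule tendsto_eventually)
qed

lemma first_part:
  fixes a :: "nat \<Rightarrow> nat"
  assumes sm: "strict_mono a" and aF: "range a \<subseteq> F" and FM: "F \<in> M"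
  shows "\<exists>(d :: nat \<Rightarrow> nat) N (T :: (nat \<Rightarrow> real) \<Rightarrow> nat \<Rightarrow> nat \<Rightarrow> real) c C.
            (\<forall>n. fd_norm (d n) (N n)) \<and> 0 < c \<and>
            linear_on_c00' T \<and> (\<forall>x \<in> c00. T x \<in> c0_sum d N) \<and>
            (\<forall>x \<in> c00. c * normM M x \<le> c0_sum_norm N (T x) \<and>
                        c0_sum_norm N (T x) \<le> C * normM M x) \<and>
            (\<forall>y \<in> c0_sum d N. \<forall>\<epsilon> > 0. \<exists>x \<in> c00.
                        c0_sum_norm N (\<lambda>n i. T x n i - y n i) < \<epsilon>)"
proof -
  define d where "d n = a n - st a n" for n
  define N where "N n w = normM M (emb a n w)" for n w
  define T1 where "T1 x = (\<lambda>n j. if j < d n then x (st a n + j) else 0)" for x :: "nat \<Rightarrow> real"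
  have NP: "N n (T1 x n) = normM M (Pb a n x)" for n x
    unfolding N_def T1_def d_def using emb_T1[OF sm] by simp
  have fd: "\<forall>n. fd_norm (d n) (N n)" unfolding d_def N_def using fd_emb[OF sm] by blast
  have lin: "linear_on_c00' T1" unfolding linear_on_c00'_def T1_def by (auto simp: fun_eq_iff)
  have inc0: "\<forall>x\<in>c00. T1 x \<in> c0_sum d N"
  proof
    fix x :: "nat \<Rightarrow> real" assume x: "x \<in> c00"
    have "(\<lambda>n. N n (T1 x n)) \<longlonglongrightarrow> 0" unfolding NP by (rule Pb_eventually[OF sm x])
    then show "T1 x \<in> c0_sum d N" unfolding c0_sum_def by (auto simp: T1_def)
  qed
  have bnd: "\<forall>x\<in>c00. (1/3) * normM M x \<le> c0_sum_norm N (T1 x) \<and> c0_sum_norm N (T1 x) \<le> 1 * normM M x"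
  proof
    fix x :: "nat \<Rightarrow> real" assume x: "x \<in> c00"
    have eq: "c0_sum_norm N (T1 x) = (SUP n. normM M (Pb a n x))" unfolding c0_sum_norm_def NP ..
    have bdd: "bdd_above (range (\<lambda>n. normM M (Pb a n x)))"
      using Pb_le[OF x] by (intro bdd_aboveI[of _ "normM M x"]) auto
    have up: "(SUP n. normM M (Pb a n x)) \<le> normM M x" using Pb_le[OF x] by (intro cSUP_least) auto
    have "normM M x \<le> 3 * (SUP n. normM M (Pb a n x))"
      using decomp[OF sm aF FM x] cSUP_upper[OF _ bdd] by blast
    then show "(1/3) * normM M x \<le> c0_sum_norm N (T1 x) \<and> c0_sum_norm N (T1 x) \<le> 1 * normM M x"
      using eq up by simp
  qed
  have dens: "\<forall>y \<in> c0_sum d N. \<forall>\<epsilon> > 0. \<exists>x \<in> c00. c0_sum_norm N (\<lambda>n i. T1 x n i - y n i) < \<epsilon>"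
  proof (intro ballI allI impI)
    fix y \<epsilon> assume y: "y \<in> c0_sum d N" and ep: "(\<epsilon>::real) > 0"
    have ysupp: "\<And>n i. i \<ge> d n \<Longrightarrow> y n i = 0" and ylim: "(\<lambda>n. N n (y n)) \<longlonglongrightarrow> 0"
      using y unfolding c0_sum_def by auto
    obtain n0 where n0: "\<And>n. n \<ge> n0 \<Longrightarrow> norm (N n (y n) - 0) < \<epsilon>/2"
      using LIMSEQ_D[OF ylim, of "\<epsilon>/2"] ep by auto
    define x where "x = (\<lambda>i. \<Sum>m<n0. emb a m (y m) i)"
    have xc: "x \<in> c00"
    proof (rule c00_supp)
      show "finite (\<Union>m<n0. blk a m)" by simp
      show "supp_in (\<Union>m<n0. blk a m) x"
        unfolding supp_in_def x_def by (auto simp: emb_def intro!: sum.neutral)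
    qed
    have Tx: "T1 x n j = (if n < n0 \<and> j < d n then y n j else 0)" for n j
    proof (cases "j < d n")
      case False then show ?thesis by (simp add: T1_def)
    next
      case True
      have inb: "st a n + j \<in> blk a n" using True st_le[OF sm, of n] by (auto simp: blk_def d_def)
      have other: "emb a m (y m) (st a n + j) = 0" if "m \<noteq> n" for m
        using emb_other[OF sm inb] that by auto
      show ?thesis
      proof (cases "n < n0")
        case True2: True
        have "x (st a n + j) = emb a n (y n) (st a n + j)"
          unfolding x_def by (rule sum_single[OF True2]) (use other in auto)
        also have "\<dots> = y n j" using emb_at[OF sm] True by (simp add: d_def)
        finally show ?thesis using True True2 by (simp add: T1_def)
      next
        case False
        have "x (st a n + j) = 0" unfolding x_def using other False by (intro sum.neutral) auto
        then show ?thesis using True False by (simp add: T1_def)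
      qed
    qed
    have Dle: "N n (\<lambda>i. T1 x n i - y n i) \<le> \<epsilon>/2" for n
    proof (cases "n < n0")
      case True
      have "(\<lambda>i. T1 x n i - y n i) = (\<lambda>_. 0)" using True ysupp by (auto simp: Tx fun_eq_iff)
      then show ?thesis using ep by (simp add: N_def emb_zero normM_zero)
    next
      case False
      have eqd: "(\<lambda>i. T1 x n i - y n i) = (\<lambda>i. (-1) * y n i)" using False by (auto simp: Tx fun_eq_iff)
      have "N n (\<lambda>i. T1 x n i - y n i) = normM M (emb a n (\<lambda>i. (-1) * y n i))"
        unfolding eqd N_def ..
      also have "emb a n (\<lambda>i. (-1) * y n i) = (\<lambda>i. (-1) * emb a n (y n) i)" by (rule emb_scale)
      also have "normM M (\<lambda>i. (-1) * emb a n (y n) i) = \<bar>-1\<bar> * normM M (emb a n (y n))"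
        by (rule normM_scale[OF emb_c00])
      finally have "N n (\<lambda>i. T1 x n i - y n i) = N n (y n)" by (simp add: N_def)
      moreover have "N n (y n) < \<epsilon>/2" using n0[of n] False by simp
      ultimately show ?thesis by simp
    qed
    have "c0_sum_norm N (\<lambda>n i. T1 x n i - y n i) \<le> \<epsilon>/2"
      unfolding c0_sum_norm_def by (rule cSUP_least) (use Dle in auto)
    then show "\<exists>x \<in> c00. c0_sum_norm N (\<lambda>n i. T1 x n i - y n i) < \<epsilon>"
      using xc ep by (intro bexI[of _ x]) auto
  qed
  show ?thesis
    apply (rule exI[of _ d], rule exI[of _ N], rule exI[of _ T1], rule exI[of _ "1/3"], rule exI[of _ 1])
    using fd lin inc0 bnd dens by simp
qed


lemma block_net:
  fixes a :: "nat \<Rightarrow> nat"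
  shows "\<exists>ws. (\<forall>w\<in>set ws. \<forall>x. supp_in (blk a n) x \<longrightarrow> \<bar>\<Sum>i\<in>blk a n. w i * x i\<bar> \<le> normM M x) \<and>
              (\<forall>x. supp_in (blk a n) x \<longrightarrow> (\<exists>w\<in>set ws. normM M x \<le> 2 * \<bar>\<Sum>i\<in>blk a n. w i * x i\<bar>))"
proof (rule net)
  have c: "supp_in (blk a n) x \<Longrightarrow> x \<in> c00" for x by (rule c00_supp[OF blk_finite])
  show "finite (blk a n)" by simp
  show "\<forall>x y. supp_in (blk a n) x \<longrightarrow> supp_in (blk a n) y \<longrightarrow>
      normM M (\<lambda>i. x i + y i) \<le> normM M x + normM M y"
    using normM_triangle c by blast
  show "\<forall>x t. supp_in (blk a n) x \<longrightarrow> 0 < t \<longrightarrow> normM M (\<lambda>i. t * x i) = t * normM M x"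
    using normM_scale c by fastforce
  show "\<forall>x. supp_in (blk a n) x \<longrightarrow> normM M (\<lambda>i. - x i) = normM M x"
  proof (intro allI impI)
    fix x assume "supp_in (blk a n) x"
    then have "normM M (\<lambda>i. (-1) * x i) = \<bar>-1\<bar> * normM M x" using normM_scale c by blast
    then show "normM M (\<lambda>i. - x i) = normM M x" by simp
  qed
  show "\<forall>x i. supp_in (blk a n) x \<longrightarrow> \<bar>x i\<bar> \<le> normM M x" using normM_abs_le c by blast
  show "\<forall>x. supp_in (blk a n) x \<longrightarrow> normM M x \<le> (\<Sum>i\<in>blk a n. \<bar>x i\<bar>)"
    using normM_l1[OF blk_finite] by blast
qed

lemma sum_Pb: "(\<Sum>i\<in>blk a n. w i * x i) = (\<Sum>i\<in>blk a n. w i * Pb a n x i)"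
  by (intro sum.cong) (auto simp: Pb_def)

lemma second_part:
  fixes a :: "nat \<Rightarrow> nat"
  assumes sm: "strict_mono a" and aF: "range a \<subseteq> F" and FM: "F \<in> M"
  shows "\<exists>(T :: (nat \<Rightarrow> real) \<Rightarrow> nat \<Rightarrow> real) c C.
            0 < c \<and> linear_on_c00 T \<and> (\<forall>x \<in> c00. T x \<in> c0) \<and>
            (\<forall>x \<in> c00. c * normM M x \<le> c0_norm (T x) \<and> c0_norm (T x) \<le> C * normM M x)"
proof -
  have "\<forall>n. \<exists>ws. (\<forall>w\<in>set ws. \<forall>x. supp_in (blk a n) x \<longrightarrow> \<bar>\<Sum>i\<in>blk a n. w i * x i\<bar> \<le> normM M x) \<and>
              (\<forall>x. supp_in (blk a n) x \<longrightarrow> (\<exists>w\<in>set ws. normM M x \<le> 2 * \<bar>\<Sum>i\<in>blk a n. w i * x i\<bar>))"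
    using block_net by blast
  then obtain W where W: "\<And>n. (\<forall>w\<in>set (W n). \<forall>x. supp_in (blk a n) x \<longrightarrow> \<bar>\<Sum>i\<in>blk a n. w i * x i\<bar> \<le> normM M x) \<and>
              (\<forall>x. supp_in (blk a n) x \<longrightarrow> (\<exists>w\<in>set (W n). normM M x \<le> 2 * \<bar>\<Sum>i\<in>blk a n. w i * x i\<bar>))"
    by metis
  define Fk where "Fk n k x = (if k < length (W n) then (\<Sum>i\<in>blk a n. (W n ! k) i * x i) else 0)"
    for n k and x :: "nat \<Rightarrow> real"
  define T2 where "T2 x = (\<lambda>j. Fk (fst (prod_decode j)) (snd (prod_decode j)) x)" for x
  have Fb: "\<bar>Fk n k x\<bar> \<le> normM M (Pb a n x)" if x: "x \<in> c00" for n k x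
  proof (cases "k < length (W n)")
    case True
    then have "W n ! k \<in> set (W n)" by simp
    then have "\<bar>\<Sum>i\<in>blk a n. (W n ! k) i * Pb a n x i\<bar> \<le> normM M (Pb a n x)"
      using W[of n] Pb_supp by blast
    then show ?thesis using True by (simp add: Fk_def sum_Pb[symmetric])
  next
    case False then show ?thesis using normM_nonneg[OF Pb_c00[OF x]] by (simp add: Fk_def)
  qed
  have Tb: "\<bar>T2 x j\<bar> \<le> normM M x" if x: "x \<in> c00" for x j
    unfolding T2_def using Fb[OF x] Pb_le[OF x] by (meson order_trans)
  have lin: "linear_on_c00 T2"
    unfolding linear_on_c00_def T2_def Fk_def
    by (auto simp: fun_eq_iff sum.distrib sum_distrib_left algebra_simps)
  have inc0: "\<forall>x\<in>c00. T2 x \<in> c0"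
  proof
    fix x :: "nat \<Rightarrow> real" assume x: "x \<in> c00"
    obtain K where K: "\<forall>i. x i \<noteq> 0 \<longrightarrow> i < a K" using c00_bound[OF sm x] by blast
    define S where "S = prod_encode ` (SIGMA n:{..K}. {..<length (W n)})"
    have finS: "finite S" unfolding S_def by (intro finite_imageI finite_SigmaI) auto
    have sub: "{j. T2 x j \<noteq> 0} \<subseteq> S"
    proof
      fix j assume "j \<in> {j. T2 x j \<noteq> 0}"
      then have nz: "Fk (fst (prod_decode j)) (snd (prod_decode j)) x \<noteq> 0" by (simp add: T2_def)
      define n where "n = fst (prod_decode j)"
      define k where "k = snd (prod_decode j)"
      have k: "k < length (W n)" using nz by (auto simp: Fk_def n_def k_def split: if_splits)
      have n: "n \<le> K"
      proof (rule ccontr)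
        assume "\<not> n \<le> K"
        then have "Pb a n x = (\<lambda>_. 0)" using Pb_vanish[OF sm K] by simp
        then have "Fk n k x = 0" by (simp add: Fk_def sum_Pb[where a=a and n=n and x=x])
        then show False using nz by (simp add: n_def k_def)
      qed
      have "j = prod_encode (n, k)" by (simp add: n_def k_def)
      then show "j \<in> S" unfolding S_def using k n by blast
    qed
    obtain B where B: "S \<subseteq> {..<B}" using finite_nat_bounded[OF finS] by blast
    have "\<forall>\<^sub>F j in sequentially. T2 x j = 0"
      by (rule eventually_sequentiallyI[of B]) (use sub B in force)
    then have "T2 x \<longlonglongrightarrow> 0" by (rule tendsto_eventually)
    then show "T2 x \<in> c0" by (simp add: c0_def)
  qed
  have bnd: "\<forall>x\<in>c00. (1/6) * normM M x \<le> c0_norm (T2 x) \<and> c0_norm (T2 x) \<le> 1 * normM M x"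
  proof
    fix x :: "nat \<Rightarrow> real" assume x: "x \<in> c00"
    have bdd: "bdd_above (range (\<lambda>j. \<bar>T2 x j\<bar>))" using Tb[OF x] by (intro bdd_aboveI[of _ "normM M x"]) auto
    have up: "c0_norm (T2 x) \<le> normM M x" unfolding c0_norm_def using Tb[OF x] by (intro cSUP_least) auto
    have "normM M (Pb a n x) \<le> 2 * c0_norm (T2 x)" for n
    proof -
      obtain w where w: "w \<in> set (W n)" "normM M (Pb a n x) \<le> 2 * \<bar>\<Sum>i\<in>blk a n. w i * Pb a n x i\<bar>"
        using W[of n] Pb_supp by blast
      obtain k where k: "k < length (W n)" "W n ! k = w" using w(1) by (auto simp: in_set_conv_nth)
      have "T2 x (prod_encode (n, k)) = (\<Sum>i\<in>blk a n. w i * Pb a n x i)"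
        using k by (simp add: T2_def Fk_def sum_Pb[symmetric])
      moreover have "\<bar>T2 x (prod_encode (n, k))\<bar> \<le> c0_norm (T2 x)"
        unfolding c0_norm_def by (rule cSUP_upper[OF _ bdd]) simp
      ultimately show ?thesis using w(2) by simp
    qed
    then have "normM M x \<le> 3 * (2 * c0_norm (T2 x))" using decomp[OF sm aF FM x] by blast
    then show "(1/6) * normM M x \<le> c0_norm (T2 x) \<and> c0_norm (T2 x) \<le> 1 * normM M x" using up by simp
  qed
  show ?thesis
    apply (rule exI[of _ T2], rule exI[of _ "1/6"], rule exI[of _ 1])
    using lin inc0 bnd by simp
qed

theorem lemma3p6:
  fixes M :: "nat set set"
  assumes "cantor_compact M"
    and "\<exists>A \<in> M. infinite A"
  shows "(\<exists>(d :: nat \<Rightarrow> nat) N (T :: (nat \<Rightarrow> real) \<Rightarrow> nat \<Rightarrow> nat \<Rightarrow> real) c C.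
            (\<forall>n. fd_norm (d n) (N n)) \<and> 0 < c \<and>
            linear_on_c00' T \<and> (\<forall>x \<in> c00. T x \<in> c0_sum d N) \<and>
            (\<forall>x \<in> c00. c * normM M x \<le> c0_sum_norm N (T x) \<and>
                        c0_sum_norm N (T x) \<le> C * normM M x) \<and>
            (\<forall>y \<in> c0_sum d N. \<forall>\<epsilon> > 0. \<exists>x \<in> c00.
                        c0_sum_norm N (\<lambda>n i. T x n i - y n i) < \<epsilon>))
       \<and> (\<exists>(T :: (nat \<Rightarrow> real) \<Rightarrow> nat \<Rightarrow> real) c C.
            0 < c \<and> linear_on_c00 T \<and> (\<forall>x \<in> c00. T x \<in> c0) \<and>
            (\<forall>x \<in> c00. c * normM M x \<le> c0_norm (T x) \<and> c0_norm (T x) \<le> C * normM M x))"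
proof -
  obtain A where A: "A \<in> M" "infinite A" using assms(2) by blast
  define a where "a = enumerate A"
  have sm: "strict_mono a" unfolding a_def using strict_mono_enumerate[OF A(2)] .
  have aF: "range a \<subseteq> A" unfolding a_def using range_enumerate[OF A(2)] by simp
  show ?thesis using first_part[OF sm aF A(1)] second_part[OF sm aF A(1)] by blast
qed


end
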